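(* Let $G=(V,E)$ with $|V|\ge 3$, $N\ge3$, $\varepsilon=0$ and $s_0\in S_{nc}$. Then for every $\gamma\in(0,1)$, the game $\Gamma_N(G|s_0,\gamma,0)$ has a nonpositional trigger strategies profile $\bar\sigma$.
   Context: Setting. $G=(V,E)$ is a finite, simple, connected, undirected graph; $N\ge 3$ is an integer; $\gamma\in(0,1)$ and $\varepsilon\in[0,\frac1{N-1}]$ are parameters. There are $N$ tokens: cops $C_1,\dots,C_{N-1}$ (tokens $1,\dots,N-1$) and the robber $R$ (token $N$). A state is $s=(x^1,\dots,x^N,n)$ where $x^i\in V$ is the position of token $i$ and $n\in\{1,\dots,N\}$ is the token that moves next; $S^n$ denotes the set of states with token $n$ to move. A state is a capture state if $x^i=x^N$ for some $i\le N-1$; $S_{nc}$ is the set of noncapture states. In each turn exactly one token, the one to move, moves to a vertex of its closed neighbourhood (it may stay put); the order of moves is $C_1,C_2,\dots,C_{N-1},R,C_1,\dots$. Starting from an initial state $s_0\in S_{nc}$ at time $0$, the capture time is the first time $t$ at which a capture state occurs (infinite if never); after capture the game is over. Auxiliary games. For $m\in\{1,\dots,N\}$, $\Gamma_N^m(G|s_0,\gamma,\varepsilon)$ is the two-player zero-sum game in which player $P_m$ controls token $m$ and player $P_{-m}$ controls all other tokens, with the following payoff to $P_m$ ($P_{-m}$ receives its negative): $0$ if no capture ever occurs; if capture occurs at time $t$: for $m=N$, $-\gamma^t$; for $m\le N-1$, $\frac{1-\varepsilon}{K}\gamma^t$ if exactly $K\in\{1,\dots,N-2\}$ cops, including $C_m$,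 are on the robber's vertex, $\frac{\varepsilon}{N-K-1}\gamma^t$ if exactly $K\in\{1,\dots,N-2\}$ cops, not including $C_m$, are on the robber's vertex, and $\frac{\gamma^t}{N-1}$ if all $N-1$ cops are on the robber's vertex. $\Gamma^N_N$ is the modified cops-and-robber (CR) game. A pure positional strategy for token $n$ maps each state in $S^n\cap S_{nc}$ to an allowed next vertex. Each $\Gamma^m_N$ has optimal pure positional strategies (optimal from every initial state). For $m,n\in\{1,\dots,N\}$, $\phi^n_m$ denotes the strategy of token $n$ in a chosen pair of optimal pure positional strategies of $\Gamma^m_N$ (so $\phi^m_m$ is $P_m$'s optimal strategy and $(\phi^n_m)_{n\ne m}$ is $P_{-m}$'s). $\widehat\Sigma^n$ is the set of pure positional strategies of token $n$ that are components of optimal strategy pairs of $\Gamma^N_N$ (CR-optimal strategies). Trigger strategies. Given a choice of $(\phi^n_m)_{n,m}$, the trigger strategies profile $\bar\sigma=(\bar\sigma^1,\dots,\bar\sigma^N)$ of the $N$-player SCAR game $\Gamma_N(G|s_0,\gamma,\varepsilon)$ (same board and moves; player $n$ controls token $n$) is: token $n$, at current state $s$, plays $\phi^n_n(s)$ as long as every other player $m$ has followed $\phi^m_m$, and plays $\phi^n_m(s)$ from the moment a player $m\neq n$ deviates from $\phi^m_m$. Different choices of the optimal strategies give different trigger strategies profiles. $\bar\sigma$ is called positional if for all $n,m\in\{1,\dots,N\}$ there is $\widehat\sigma^n\in\widehat\Sigma^n$ with $\phi^n_m(s)=\widehat\sigma^n(s)$ for every state $s\in S^n\cap S_{nc}$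 reachable from $s_0$ by a finite sequence of legal moves passing only through noncapture states; otherwise $\bar\sigma$ is nonpositional. *)

theory Defs
  imports Main "HOL-Library.Extended_Real" Complex_Main
begin

definition simple_connected_graph :: "'v set \<Rightarrow> ('v \<Rightarrow> 'v \<Rightarrow> bool) \<Rightarrow> bool" where
  "simple_connected_graph V E \<longleftrightarrow> finite V \<and> V \<noteq> {} \<and>
     (\<forall>u v. E u v \<longrightarrow> u \<in> V \<and> v \<in> V) \<and>
     (\<forall>u v. E u v \<longrightarrow> E v u) \<and> (\<forall>u. \<not> E u u) \<and>
     (\<forall>u\<in>V. \<forall>v\<in>V. E\<^sup>*\<^sup>* u v)"

definition cnbhd :: "('v \<Rightarrow> 'v \<Rightarrow> bool) \<Rightarrow> 'v \<Rightarrow> 'v set" where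
  "cnbhd E v = {u. u = v \<or> E v u}"

text \<open>A state is (x, n): x i is the position of token i (tokens 1..N; cops 1..N-1,
  robber N), n is the token to move. Positions outside 1..N are fixed to undefined.\<close>
type_synonym 'v state = "(nat \<Rightarrow> 'v) \<times> nat"

definition States :: "'v set \<Rightarrow> nat \<Rightarrow> 'v state set" where
  "States V N = {(x, n). (\<forall>i\<in>{1..N}. x i \<in> V) \<and> (\<forall>i. i \<notin> {1..N} \<longrightarrow> x i = undefined)
                   \<and> n \<in> {1..N}}"

definition capture :: "nat \<Rightarrow> 'v state \<Rightarrow> bool" where
  "capture N s \<longleftrightarrow> (\<exists>i\<in>{1..N-1}. fst s i = fst s N)"

definition next_tok :: "nat \<Rightarrow> nat \<Rightarrow> nat" where
  "next_tok N n = (if n = N then 1 else n + 1)"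

definition move :: "nat \<Rightarrow> 'v state \<Rightarrow> 'v \<Rightarrow> 'v state" where
  "move N s v = ((fst s)(snd s := v), next_tok N (snd s))"

text \<open>General (history-dependent) pure strategies: histories are nonempty lists of states,
  ending with the current state. A profile assigns a strategy to each token.\<close>
type_synonym 'v hstrat = "'v state list \<Rightarrow> 'v"

primrec hist :: "nat \<Rightarrow> (nat \<Rightarrow> 'v hstrat) \<Rightarrow> 'v state \<Rightarrow> nat \<Rightarrow> 'v state list" where
  "hist N \<sigma> s0 0 = [s0]"
| "hist N \<sigma> s0 (Suc t) =
     hist N \<sigma> s0 t @ [move N (last (hist N \<sigma> s0 t)) (\<sigma> (snd (last (hist N \<sigma> s0 t))) (hist N \<sigma> s0 t))]"

definition play :: "nat \<Rightarrow> (nat \<Rightarrow> 'v hstrat) \<Rightarrow> 'v state \<Rightarrow> nat \<Rightarrow> 'v state" where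
  "play N \<sigma> s0 t = last (hist N \<sigma> s0 t)"

definition legal_hs :: "'v set \<Rightarrow> ('v \<Rightarrow> 'v \<Rightarrow> bool) \<Rightarrow> nat \<Rightarrow> nat \<Rightarrow> 'v hstrat \<Rightarrow> bool" where
  "legal_hs V E N n \<sigma> \<longleftrightarrow> (\<forall>h. h \<noteq> [] \<and> last h \<in> States V N \<and> snd (last h) = n
        \<longrightarrow> \<sigma> h \<in> cnbhd E (fst (last h) n))"

definition reward :: "nat \<Rightarrow> nat \<Rightarrow> real \<Rightarrow> 'v state \<Rightarrow> real" where
  "reward N m \<epsilon> s =
     (if m = N then -1
      else (let K = card {i\<in>{1..N-1}. fst s i = fst s N} in
            if K = N - 1 then 1 / real (N - 1)
            else if fst s m = fst s N then (1 - \<epsilon>) / real K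
            else \<epsilon> / real (N - K - 1)))"

definition payoff :: "nat \<Rightarrow> nat \<Rightarrow> real \<Rightarrow> real \<Rightarrow> 'v state \<Rightarrow> (nat \<Rightarrow> 'v hstrat) \<Rightarrow> real" where
  "payoff N m \<gamma> \<epsilon> s0 \<sigma> =
     (if \<exists>t. capture N (play N \<sigma> s0 t)
      then (let t = (LEAST t. capture N (play N \<sigma> s0 t)) in reward N m \<epsilon> (play N \<sigma> s0 t) * \<gamma> ^ t)
      else 0)"

definition legal_pos :: "'v set \<Rightarrow> ('v \<Rightarrow> 'v \<Rightarrow> bool) \<Rightarrow> nat \<Rightarrow> nat \<Rightarrow> ('v state \<Rightarrow> 'v) \<Rightarrow> bool" where
  "legal_pos V E N n \<phi> \<longleftrightarrow> (\<forall>s\<in>States V N. snd s = n \<and> \<not> capture N s \<longrightarrow> \<phi> s \<in> cnbhd E (fst s n))"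

definition pos_profile :: "(nat \<Rightarrow> 'v state \<Rightarrow> 'v) \<Rightarrow> nat \<Rightarrow> 'v hstrat" where
  "pos_profile \<phi> = (\<lambda>n h. \<phi> n (last h))"

text \<open>phi (a positional strategy for every token) is a pair of optimal pure positional
  strategies of Gamma^m_N (P_m: token m; P_{-m}: all other tokens), optimal from every
  initial noncapture state, i.e. a saddle point against all (history-dependent) deviations.\<close>
definition optimal_pair :: "'v set \<Rightarrow> ('v \<Rightarrow> 'v \<Rightarrow> bool) \<Rightarrow> nat \<Rightarrow> real \<Rightarrow> real \<Rightarrow> nat
                             \<Rightarrow> (nat \<Rightarrow> 'v state \<Rightarrow> 'v) \<Rightarrow> bool" where
  "optimal_pair V E N \<gamma> \<epsilon> m \<phi> \<longleftrightarrow>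
     (\<forall>n\<in>{1..N}. legal_pos V E N n (\<phi> n)) \<and>
     (\<forall>s0\<in>States V N. \<not> capture N s0 \<longrightarrow>
        (\<forall>\<sigma>. legal_hs V E N m \<sigma> \<longrightarrow>
             payoff N m \<gamma> \<epsilon> s0 ((pos_profile \<phi>)(m := \<sigma>)) \<le> payoff N m \<gamma> \<epsilon> s0 (pos_profile \<phi>)) \<and>
        (\<forall>\<tau>. (\<forall>n\<in>{1..N}. legal_hs V E N n (\<tau> n)) \<longrightarrow>
             payoff N m \<gamma> \<epsilon> s0 (pos_profile \<phi>) \<le> payoff N m \<gamma> \<epsilon> s0 (\<tau>(m := pos_profile \<phi> m))))"

text \<open>CR-optimal strategies of token n: components of optimal pairs of Gamma^N_N.\<close>
definition CR_opt :: "'v set \<Rightarrow> ('v \<Rightarrow> 'v \<Rightarrow> bool) \<Rightarrow> nat \<Rightarrow> real \<Rightarrow> real \<Rightarrow> nat \<Rightarrow> ('v state \<Rightarrow> 'v) set" where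
  "CR_opt V E N \<gamma> \<epsilon> n = {\<psi>. \<exists>\<phi>. optimal_pair V E N \<gamma> \<epsilon> N \<phi> \<and> \<psi> = \<phi> n}"

inductive_set reach :: "('v \<Rightarrow> 'v \<Rightarrow> bool) \<Rightarrow> nat \<Rightarrow> 'v state \<Rightarrow> 'v state set"
  for E N s0 where
  start: "s0 \<in> reach E N s0"
| step: "s \<in> reach E N s0 \<Longrightarrow> \<not> capture N s \<Longrightarrow> v \<in> cnbhd E (fst s (snd s))
           \<Longrightarrow> move N s v \<in> reach E N s0"

text \<open>A choice of optimal strategies: Phi m n = phi^n_m, for each m an optimal pair of Gamma^m_N.\<close>
definition trigger_choice :: "'v set \<Rightarrow> ('v \<Rightarrow> 'v \<Rightarrow> bool) \<Rightarrow> nat \<Rightarrow> real \<Rightarrow> real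
                               \<Rightarrow> (nat \<Rightarrow> nat \<Rightarrow> 'v state \<Rightarrow> 'v) \<Rightarrow> bool" where
  "trigger_choice V E N \<gamma> \<epsilon> \<Phi> \<longleftrightarrow> (\<forall>m\<in>{1..N}. optimal_pair V E N \<gamma> \<epsilon> m (\<Phi> m))"

text \<open>The trigger strategies profile induced by Phi (for reference): token n plays
  phi^n_n while nobody deviated, and phi^n_m after the first deviation by player m \<noteq> n.\<close>
definition first_deviator :: "nat \<Rightarrow> (nat \<Rightarrow> nat \<Rightarrow> 'v state \<Rightarrow> 'v) \<Rightarrow> 'v state list \<Rightarrow> nat option" where
  "first_deviator N \<Phi> h =
     (if \<exists>k. Suc k < length h \<and> h ! Suc k \<noteq> move N (h ! k) (\<Phi> (snd (h ! k)) (snd (h ! k)) (h ! k))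
      then Some (snd (h ! (LEAST k. Suc k < length h \<and>
                   h ! Suc k \<noteq> move N (h ! k) (\<Phi> (snd (h ! k)) (snd (h ! k)) (h ! k)))))
      else None)"

definition trigger_profile :: "nat \<Rightarrow> (nat \<Rightarrow> nat \<Rightarrow> 'v state \<Rightarrow> 'v) \<Rightarrow> nat \<Rightarrow> 'v hstrat" where
  "trigger_profile N \<Phi> n h =
     (case first_deviator N \<Phi> h of
        None \<Rightarrow> \<Phi> n n (last h)
      | Some m \<Rightarrow> (if m = n then \<Phi> n n (last h) else \<Phi> m n (last h)))"

definition positional_trigger :: "'v set \<Rightarrow> ('v \<Rightarrow> 'v \<Rightarrow> bool) \<Rightarrow> nat \<Rightarrow> real \<Rightarrow> real \<Rightarrow> 'v state
                                   \<Rightarrow> (nat \<Rightarrow> nat \<Rightarrow> 'v state \<Rightarrow> 'v) \<Rightarrow> bool" where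
  "positional_trigger V E N \<gamma> \<epsilon> s0 \<Phi> \<longleftrightarrow>
     (\<forall>n\<in>{1..N}. \<forall>m\<in>{1..N}. \<exists>\<psi>\<in>CR_opt V E N \<gamma> \<epsilon> n.
        \<forall>s\<in>reach E N s0. snd s = n \<and> \<not> capture N s \<longrightarrow> \<Phi> m n s = \<psi> s)"

end

theory Submission
  imports Defs
begin


lemma max_lip:
  fixes f g :: "'a \<Rightarrow> real"
  assumes "finite A" "A \<noteq> {}" "\<forall>u\<in>A. \<bar>f u - g u\<bar> \<le> c"
  shows "\<bar>Max (f`A) - Max (g`A)\<bar> \<le> c"
proof -
  have "Max (f`A) \<in> f`A" using Max_in[of "f`A"] assms by auto
  then obtain a where a: "a \<in> A" "Max (f`A) = f a" by auto
  have "Max (g`A) \<in> g`A" using Max_in[of "g`A"] assms by auto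
  then obtain b where b: "b \<in> A" "Max (g`A) = g b" by auto
  have "g a \<le> Max (g`A)" using a assms by auto
  moreover have "f b \<le> Max (f`A)" using b assms by auto
  ultimately show ?thesis using a b assms(3) by (smt (verit))
qed

lemma min_lip:
  fixes f g :: "'a \<Rightarrow> real"
  assumes "finite A" "A \<noteq> {}" "\<forall>u\<in>A. \<bar>f u - g u\<bar> \<le> c"
  shows "\<bar>Min (f`A) - Min (g`A)\<bar> \<le> c"
proof -
  have "Min (f`A) \<in> f`A" using Min_in[of "f`A"] assms by auto
  then obtain a where a: "a \<in> A" "Min (f`A) = f a" by auto
  have "Min (g`A) \<in> g`A" using Min_in[of "g`A"] assms by auto
  then obtain b where b: "b \<in> A" "Min (g`A) = g b" by auto
  have "g a \<ge> Min (g`A)" using a assms by auto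
  moreover have "f b \<ge> Min (f`A)" using b assms by auto
  ultimately show ?thesis using a b assms(3) by (smt (verit))
qed

lemma pow_le_zero:
  fixes x C \<gamma> :: real
  assumes "0 < \<gamma>" "\<gamma> < 1" "\<forall>k. x \<le> C * \<gamma>^k"
  shows "x \<le> 0"
proof -
  have "(\<lambda>k. C * \<gamma>^k) \<longlonglongrightarrow> C * 0"
    by (intro tendsto_mult tendsto_const LIMSEQ_power_zero) (use assms in auto)
  then show ?thesis using assms(3)
    by (simp add: LIMSEQ_le_const)
qed

lemma hist_ne: "hist N \<rho> s0 t \<noteq> []" by (cases t) auto
lemma play_0[simp]: "play N \<rho> s0 0 = s0" by (simp add: play_def)
lemma play_Suc: "play N \<rho> s0 (Suc t) = move N (play N \<rho> s0 t) (\<rho> (snd (play N \<rho> s0 t)) (hist N \<rho> s0 t))"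
  by (simp add: play_def)

locale game =
  fixes V :: "'v set" and E :: "'v \<Rightarrow> 'v \<Rightarrow> bool" and N :: nat and \<gamma> :: real
  assumes graph: "simple_connected_graph V E" and N3: "N \<ge> 3" and g0: "0 < \<gamma>" and g1: "\<gamma> < 1"
begin

definition moves :: "'v state \<Rightarrow> 'v set" where "moves s = cnbhd E (fst s (snd s))"

lemma moves_fin: "finite (moves s)"
proof -
  have "moves s \<subseteq> insert (fst s (snd s)) V" using graph
    unfolding moves_def cnbhd_def simple_connected_graph_def by auto
  then show ?thesis using graph finite_subset unfolding simple_connected_graph_def by blast
qed

lemma moves_ne: "fst s (snd s) \<in> moves s" by (simp add: moves_def cnbhd_def)

lemma moves_ne': "moves s \<noteq> {}" using moves_ne[of s] by blast

lemma move_States: "s \<in> States V N \<Longrightarrow> u \<in> moves s \<Longrightarrow> move N s u \<in> States V N"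
  using graph N3 unfolding States_def move_def moves_def cnbhd_def simple_connected_graph_def next_tok_def
  by auto

definition G :: "('v state \<Rightarrow> real) \<Rightarrow> ('v state \<Rightarrow> real) \<Rightarrow> 'v state \<Rightarrow> real" where
  "G r w s = (if capture N s then r s else w s)"

definition T :: "nat \<Rightarrow> ('v state \<Rightarrow> real) \<Rightarrow> ('v state \<Rightarrow> real) \<Rightarrow> 'v state \<Rightarrow> real" where
  "T m r w s = (if capture N s then 0 else if snd s = m
      then \<gamma> * Max ((\<lambda>u. G r w (move N s u)) ` moves s)
      else \<gamma> * Min ((\<lambda>u. G r w (move N s u)) ` moves s))"

lemma T_lip:
  assumes "\<forall>s'. \<bar>w s' - w' s'\<bar> \<le> c"
  shows "\<bar>T m r w s - T m r w' s\<bar> \<le> \<gamma> * c"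
proof -
  have c0: "0 \<le> c" using order_trans[OF abs_ge_zero assms[rule_format]] by blast
  have c: "\<forall>u\<in>moves s. \<bar>G r w (move N s u) - G r w' (move N s u)\<bar> \<le> c"
  proof
    fix u show "\<bar>G r w (move N s u) - G r w' (move N s u)\<bar> \<le> c"
      using assms[rule_format, of "move N s u"] c0 by (simp add: G_def)
  qed
  have "\<bar>Max ((\<lambda>u. G r w (move N s u)) ` moves s) - Max ((\<lambda>u. G r w' (move N s u)) ` moves s)\<bar> \<le> c"
    by (rule max_lip[OF moves_fin moves_ne' c])
  moreover have "\<bar>Min ((\<lambda>u. G r w (move N s u)) ` moves s) - Min ((\<lambda>u. G r w' (move N s u)) ` moves s)\<bar> \<le> c"
    by (rule min_lip[OF moves_fin moves_ne' c])
  ultimately show ?thesis using g0 c0 unfolding T_def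
    by (auto simp: right_diff_distrib[symmetric] abs_mult)
qed

lemma T_bound:
  assumes "\<forall>s'. \<bar>G r w s'\<bar> \<le> B"
  shows "\<bar>T m r w s\<bar> \<le> \<gamma> * B"
proof -
  have c: "\<forall>u\<in>moves s. \<bar>G r w (move N s u) - (\<lambda>_. 0) u\<bar> \<le> B"
  proof
    fix u show "\<bar>G r w (move N s u) - (\<lambda>_. 0) u\<bar> \<le> B" using assms[rule_format, of "move N s u"] by simp
  qed
  have B0: "0 \<le> B" using order_trans[OF abs_ge_zero assms[rule_format]] by blast
  have e: "(\<lambda>_. 0::real) ` moves s = {0}" by (metis moves_ne image_constant)
  have "\<bar>Max ((\<lambda>u. G r w (move N s u)) ` moves s) - Max ((\<lambda>_. 0) ` moves s)\<bar> \<le> B"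
    by (rule max_lip[OF moves_fin moves_ne' c])
  moreover have "\<bar>Min ((\<lambda>u. G r w (move N s u)) ` moves s) - Min ((\<lambda>_. 0) ` moves s)\<bar> \<le> B"
    by (rule min_lip[OF moves_fin moves_ne' c])
  ultimately show ?thesis using g0 B0 e unfolding T_def
    by (auto simp: abs_mult)
qed

definition vs :: "nat \<Rightarrow> ('v state \<Rightarrow> real) \<Rightarrow> nat \<Rightarrow> 'v state \<Rightarrow> real" where
  "vs m r k = ((T m r) ^^ k) (\<lambda>_. 0)"

lemma vs_0: "vs m r 0 = (\<lambda>_. 0)" by (simp add: vs_def)
lemma vs_Suc: "vs m r (Suc k) = T m r (vs m r k)" by (simp add: vs_def)

lemma vs_diff:
  assumes r: "\<forall>s. \<bar>r s\<bar> \<le> 1"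
  shows "\<bar>vs m r (Suc k) s - vs m r k s\<bar> \<le> \<gamma>^k"
proof (induction k arbitrary: s)
  case 0
  have "\<forall>s'. \<bar>G r (\<lambda>_. 0) s'\<bar> \<le> 1" using r by (simp add: G_def)
  then have "\<bar>T m r (\<lambda>_. 0) s\<bar> \<le> \<gamma> * 1" by (rule T_bound)
  then show ?case using g1 by (simp add: vs_0 vs_Suc)
next
  case (Suc k)
  have "\<bar>T m r (vs m r (Suc k)) s - T m r (vs m r k) s\<bar> \<le> \<gamma> * \<gamma>^k"
    by (rule T_lip) (use Suc in blast)
  then show ?case by (simp add: vs_Suc[of m r "Suc k"] vs_Suc[of m r k])
qed

definition val :: "nat \<Rightarrow> ('v state \<Rightarrow> real) \<Rightarrow> 'v state \<Rightarrow> real" where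
  "val m r s = (\<Sum>i. vs m r (Suc i) s - vs m r i s)"

lemma geo_summable: "summable (\<lambda>i. \<gamma>^i)" using g0 g1 by (intro summable_geometric) auto

lemma diff_summable:
  assumes r: "\<forall>s. \<bar>r s\<bar> \<le> 1"
  shows "summable (\<lambda>i. vs m r (Suc i) s - vs m r i s)"
  by (rule summable_comparison_test[OF _ geo_summable]) (use vs_diff[OF r] in auto)

lemma val_tail:
  assumes r: "\<forall>s. \<bar>r s\<bar> \<le> 1"
  shows "\<bar>val m r s - vs m r k s\<bar> \<le> \<gamma>^k / (1 - \<gamma>)"
proof -
  let ?d = "\<lambda>i. vs m r (Suc i) s - vs m r i s"
  have sm: "summable ?d" by (rule diff_summable[OF r])
  have tel: "sum ?d {..<k} = vs m r k s" using sum_lessThan_telescope[of "\<lambda>i. vs m r i s" k]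
    by (simp add: vs_0)
  have sp: "val m r s = (\<Sum>i. ?d (i + k)) + sum ?d {..<k}"
    unfolding val_def by (rule suminf_split_initial_segment[OF sm])
  have sm2: "summable (\<lambda>i. ?d (i + k))" using sm by (rule summable_ignore_initial_segment)
  have gs: "summable (\<lambda>i. \<gamma>^k * \<gamma>^i)" using geo_summable by (rule summable_mult)
  have gsum: "(\<Sum>i. \<gamma>^k * \<gamma>^i) = \<gamma>^k / (1 - \<gamma>)"
    using suminf_mult[OF geo_summable, of "\<gamma>^k"] suminf_geometric[of \<gamma>] g0 g1 by simp
  have b: "\<bar>?d (i + k)\<bar> \<le> \<gamma>^k * \<gamma>^i" for i
    using vs_diff[OF r, of m "i+k" s] by (simp add: power_add mult.commute)
  have b1: "?d (i + k) \<le> \<gamma>^k * \<gamma>^i" for i using b[of i] by linarith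
  have b2: "- (\<gamma>^k * \<gamma>^i) \<le> ?d (i + k)" for i using b[of i] by linarith
  have "(\<Sum>i. ?d (i + k)) \<le> (\<Sum>i. \<gamma>^k * \<gamma>^i)"
    by (rule suminf_le[OF _ sm2 gs]) (rule b1)
  moreover have "(\<Sum>i. - (\<gamma>^k * \<gamma>^i)) \<le> (\<Sum>i. ?d (i + k))"
    by (rule suminf_le[OF _ summable_minus[OF gs] sm2]) (rule b2)
  ultimately show ?thesis using sp tel gsum suminf_minus[OF gs] by auto
qed

lemma zero_by_pow:
  fixes x C :: real
  assumes "\<forall>k. \<bar>x\<bar> \<le> C * \<gamma>^k"
  shows "x = 0"
  using pow_le_zero[OF g0 g1, of "\<bar>x\<bar>" C] assms by simp

lemma val_fix:
  assumes r: "\<forall>s. \<bar>r s\<bar> \<le> 1"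
  shows "T m r (val m r) s = val m r s"
proof -
  have "\<bar>T m r (val m r) s - val m r s\<bar> \<le> (2 / (1 - \<gamma>)) * \<gamma>^k" for k
  proof -
    have a: "\<bar>T m r (val m r) s - T m r (vs m r k) s\<bar> \<le> \<gamma> * (\<gamma>^k / (1 - \<gamma>))"
      by (rule T_lip) (use val_tail[OF r] in blast)
    have b: "\<bar>val m r s - vs m r (Suc k) s\<bar> \<le> \<gamma>^(Suc k) / (1 - \<gamma>)" by (rule val_tail[OF r])
    have "\<gamma> * (\<gamma>^k / (1 - \<gamma>)) \<le> \<gamma>^k / (1 - \<gamma>)" "\<gamma>^(Suc k) / (1 - \<gamma>) \<le> \<gamma>^k / (1 - \<gamma>)"
      using g0 g1 by (auto simp: divide_right_mono mult_left_le_one_le)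
    then show ?thesis using a b vs_Suc[of m r k] by (auto simp: field_simps)
  qed
  then have "\<forall>k. \<bar>T m r (val m r) s - val m r s\<bar> \<le> (2 / (1 - \<gamma>)) * \<gamma>^k" by blast
  then have "T m r (val m r) s - val m r s = 0" by (rule zero_by_pow)
  then show ?thesis by simp
qed

lemma val_bound:
  assumes r: "\<forall>s. \<bar>r s\<bar> \<le> 1"
  shows "\<bar>val m r s\<bar> \<le> 1 / (1 - \<gamma>)"
  using val_tail[OF r, of m s 0] by (simp add: vs_0)

lemma vs_nonneg:
  assumes r: "\<forall>s. 0 \<le> r s"
  shows "0 \<le> vs m r k s"
proof (induction k arbitrary: s)
  case 0 then show ?case by (simp add: vs_0)
next
  case (Suc k)
  have G: "\<forall>u\<in>moves s. 0 \<le> G r (vs m r k) (move N s u)"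
  proof
    fix u show "0 \<le> G r (vs m r k) (move N s u)"
      using Suc[of "move N s u"] r[rule_format, of "move N s u"] by (simp add: G_def)
  qed
  have fi: "finite ((\<lambda>u. G r (vs m r k) (move N s u)) ` moves s)" using moves_fin by blast
  have ne: "(\<lambda>u. G r (vs m r k) (move N s u)) ` moves s \<noteq> {}" using moves_ne'[of s] by blast
  have "0 \<le> Max ((\<lambda>u. G r (vs m r k) (move N s u)) ` moves s)"
    using G Max_ge_iff[OF fi ne] moves_ne[of s] by blast
  moreover have "0 \<le> Min ((\<lambda>u. G r (vs m r k) (move N s u)) ` moves s)"
    using G Min_ge_iff[OF fi ne] by blast
  ultimately show ?case using g0 by (simp add: vs_Suc T_def)
qed

lemma val_nonneg:
  assumes r: "\<forall>s. \<bar>r s\<bar> \<le> 1" and r0: "\<forall>s. 0 \<le> r s"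
  shows "0 \<le> val m r s"
proof -
  have "- val m r s \<le> (1 / (1 - \<gamma>)) * \<gamma>^k" for k
    using val_tail[OF r, of m s k] vs_nonneg[OF r0, of m k s] by auto
  then have "\<forall>k. - val m r s \<le> (1 / (1 - \<gamma>)) * \<gamma>^k" by blast
  then have "- val m r s \<le> 0" by (rule pow_le_zero[OF g0 g1])
  then show ?thesis by simp
qed

definition gpay :: "('v state \<Rightarrow> real) \<Rightarrow> (nat \<Rightarrow> 'v hstrat) \<Rightarrow> 'v state \<Rightarrow> real" where
  "gpay r \<rho> s0 = (if \<exists>t. capture N (play N \<rho> s0 t)
      then (let t = (LEAST t. capture N (play N \<rho> s0 t)) in r (play N \<rho> s0 t) * \<gamma> ^ t) else 0)"

lemma payoff_gpay: "payoff N m \<gamma> \<epsilon> s0 \<rho> = gpay (reward N m \<epsilon>) \<rho> s0"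
  by (simp add: payoff_def gpay_def)

lemma gpay_neg: "gpay (\<lambda>s. - r s) \<rho> s0 = - gpay r \<rho> s0"
  by (simp add: gpay_def Let_def)

lemma G_neg: "G (\<lambda>s. - r s) (\<lambda>s. - w s) s = - G r w s" by (simp add: G_def)

lemma play_States:
  assumes s0: "s0 \<in> States V N"
    and H: "\<forall>h. h \<noteq> [] \<and> last h \<in> States V N \<and> \<not> capture N (last h) \<longrightarrow> \<rho> (snd (last h)) h \<in> moves (last h)"
  shows "(\<forall>t'<t. \<not> capture N (play N \<rho> s0 t')) \<longrightarrow> play N \<rho> s0 t \<in> States V N"
proof (induction t)
  case 0 then show ?case using s0 by simp
next
  case (Suc t)
  show ?case
  proof
    assume a: "\<forall>t'<Suc t. \<not> capture N (play N \<rho> s0 t')"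
    then have st: "play N \<rho> s0 t \<in> States V N" using Suc by auto
    have l: "last (hist N \<rho> s0 t) = play N \<rho> s0 t" by (simp add: play_def)
    have "\<rho> (snd (play N \<rho> s0 t)) (hist N \<rho> s0 t) \<in> moves (play N \<rho> s0 t)"
      using H[rule_format, of "hist N \<rho> s0 t"] hist_ne[of N \<rho> s0 t] l st a by auto
    then show "play N \<rho> s0 (Suc t) \<in> States V N" using move_States[OF st] by (simp add: play_Suc)
  qed
qed

lemma lower_gen:
  assumes nc: "\<not> capture N s0" and wb: "\<forall>s. \<bar>w s\<bar> \<le> B"
    and step: "\<forall>t. (\<forall>t'\<le>t. \<not> capture N (play N \<rho> s0 t')) \<longrightarrow>
                    w (play N \<rho> s0 t) \<le> \<gamma> * G r w (play N \<rho> s0 (Suc t))"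
  shows "w s0 \<le> gpay r \<rho> s0"
proof -
  let ?p = "play N \<rho> s0"
  have inv: "(\<forall>t'\<le>T. \<not> capture N (?p t')) \<longrightarrow> w s0 \<le> \<gamma>^T * w (?p T)" for T
  proof (induction T)
    case 0 then show ?case by simp
  next
    case (Suc T)
    show ?case
    proof
      assume a: "\<forall>t'\<le>Suc T. \<not> capture N (?p t')"
      then have ih: "w s0 \<le> \<gamma>^T * w (?p T)" using Suc by auto
      have "w (?p T) \<le> \<gamma> * G r w (?p (Suc T))" using step a by auto
      also have "\<dots> = \<gamma> * w (?p (Suc T))" using a by (simp add: G_def)
      finally have "\<gamma>^T * w (?p T) \<le> \<gamma>^T * (\<gamma> * w (?p (Suc T)))"
        using g0 by (intro mult_left_mono) auto
      then show "w s0 \<le> \<gamma>^Suc T * w (?p (Suc T))" using ih by (simp add: mult.assoc mult.left_commute)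
    qed
  qed
  show ?thesis
  proof (cases "\<exists>t. capture N (?p t)")
    case True
    define t where "t = (LEAST t. capture N (?p t))"
    have ct: "capture N (?p t)" unfolding t_def using True by (metis LeastI)
    have t0: "t \<noteq> 0" using ct nc by (cases t) auto
    then obtain t0 where t0d: "t = Suc t0" by (cases t) auto
    have P: "\<forall>t'\<le>t0. \<not> capture N (?p t')" using not_less_Least[of _ "\<lambda>t. capture N (?p t)"]
      unfolding t_def[symmetric] t0d by auto
    have "w s0 \<le> \<gamma>^t0 * w (?p t0)" using inv P by blast
    also have "\<dots> \<le> \<gamma>^t0 * (\<gamma> * G r w (?p (Suc t0)))"
      using step P g0 by (intro mult_left_mono) auto
    also have "\<dots> = r (?p t) * \<gamma>^t" using ct t0d by (simp add: G_def)
    finally show ?thesis using True unfolding gpay_def t_def by (simp add: Let_def)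
  next
    case False
    have "w s0 \<le> B * \<gamma>^T" for T
    proof -
      have "w s0 \<le> \<gamma>^T * w (?p T)" using inv False by blast
      also have "\<dots> \<le> \<gamma>^T * B" using abs_le_D1[OF wb[rule_format, of "?p T"]] g0 by (intro mult_left_mono) auto
      finally show ?thesis by (simp add: mult.commute)
    qed
    then have "w s0 \<le> 0" using pow_le_zero[OF g0 g1] by blast
    then show ?thesis using False unfolding gpay_def by simp
  qed
qed

definition good :: "nat \<Rightarrow> ('v state \<Rightarrow> real) \<Rightarrow> 'v state \<Rightarrow> 'v \<Rightarrow> bool" where
  "good m r s u \<longleftrightarrow> u \<in> moves s \<and> \<gamma> * G r (val m r) (move N s u) = T m r (val m r) s"

definition ch :: "nat \<Rightarrow> ('v state \<Rightarrow> real) \<Rightarrow> 'v state \<Rightarrow> 'v" where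
  "ch m r s = (if capture N s then fst s (snd s)
     else if \<exists>u. good m r s u \<and> capture N (move N s u) then SOME u. good m r s u \<and> capture N (move N s u)
     else SOME u. good m r s u)"

lemma ex_good:
  assumes "\<not> capture N s" shows "\<exists>u. good m r s u"
proof -
  let ?A = "(\<lambda>u. G r (val m r) (move N s u)) ` moves s"
  have fi: "finite ?A" using moves_fin by blast
  have ne: "?A \<noteq> {}" using moves_ne'[of s] by blast
  show ?thesis
  proof (cases "snd s = m")
    case True
    obtain u where "u \<in> moves s" "Max ?A = G r (val m r) (move N s u)" using Max_in[OF fi ne] by auto
    then show ?thesis using True assms unfolding good_def T_def by auto
  next
    case False
    obtain u where "u \<in> moves s" "Min ?A = G r (val m r) (move N s u)" using Min_in[OF fi ne] by auto
    then show ?thesis using False assms unfolding good_def T_def by auto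
  qed
qed

lemma ch_good: "\<not> capture N s \<Longrightarrow> good m r s (ch m r s)"
  unfolding ch_def using ex_good[of s m r]
  by (auto intro: someI_ex[of "\<lambda>u. good m r s u \<and> capture N (move N s u)", THEN conjunct1]
                  someI_ex[of "\<lambda>u. good m r s u"])

lemma ch_moves: "ch m r s \<in> moves s"
  using ch_good[of s m r] moves_ne[of s] by (cases "capture N s") (auto simp: ch_def good_def)

lemma ch_capture: "\<not> capture N s \<Longrightarrow> good m r s u \<Longrightarrow> capture N (move N s u) \<Longrightarrow> capture N (move N s (ch m r s))"
  unfolding ch_def
  by (auto intro: someI_ex[of "\<lambda>u. good m r s u \<and> capture N (move N s u)", THEN conjunct2])

lemma ch_cnbhd: "ch m r s \<in> cnbhd E (fst s (snd s))" using ch_moves[of m r s] by (simp add: moves_def)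

lemma bell_max:
  assumes r: "\<forall>s. \<bar>r s\<bar> \<le> 1" and "\<not> capture N s" "snd s = m" "u \<in> moves s"
  shows "\<gamma> * G r (val m r) (move N s u) \<le> val m r s"
proof -
  let ?A = "(\<lambda>u. G r (val m r) (move N s u)) ` moves s"
  have fi: "finite ?A" using moves_fin by blast
  have "G r (val m r) (move N s u) \<le> Max ?A" using fi assms(4) by auto
  then have "\<gamma> * G r (val m r) (move N s u) \<le> \<gamma> * Max ?A" using g0 by auto
  also have "\<dots> = val m r s" using val_fix[OF r, of m s] assms(2,3) by (simp add: T_def)
  finally show ?thesis .
qed

lemma bell_min:
  assumes r: "\<forall>s. \<bar>r s\<bar> \<le> 1" and "\<not> capture N s" "snd s \<noteq> m" "u \<in> moves s"
  shows "val m r s \<le> \<gamma> * G r (val m r) (move N s u)"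
proof -
  let ?A = "(\<lambda>u. G r (val m r) (move N s u)) ` moves s"
  have fi: "finite ?A" using moves_fin by blast
  have "Min ?A \<le> G r (val m r) (move N s u)" using fi assms(4) by auto
  then have "\<gamma> * Min ?A \<le> \<gamma> * G r (val m r) (move N s u)" using g0 by auto
  moreover have "\<gamma> * Min ?A = val m r s" using val_fix[OF r, of m s] assms(2,3) by (simp add: T_def)
  ultimately show ?thesis by simp
qed

lemma upper:
  assumes r: "\<forall>s. \<bar>r s\<bar> \<le> 1" and s0: "s0 \<in> States V N" and nc: "\<not> capture N s0"
    and oth: "\<forall>n h. n \<noteq> m \<longrightarrow> \<rho> n h = ch m r (last h)" and lm: "legal_hs V E N m (\<rho> m)"
  shows "gpay r \<rho> s0 \<le> val m r s0"
proof -
  have H: "\<forall>h. h \<noteq> [] \<and> last h \<in> States V N \<and> \<not> capture N (last h) \<longrightarrow> \<rho> (snd (last h)) h \<in> moves (last h)"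
  proof (intro allI impI)
    fix h assume a: "h \<noteq> [] \<and> last h \<in> States V N \<and> \<not> capture N (last h)"
    show "\<rho> (snd (last h)) h \<in> moves (last h)"
    proof (cases "snd (last h) = m")
      case True then show ?thesis using lm a unfolding legal_hs_def moves_def by auto
    next
      case False then show ?thesis using oth ch_moves by simp
    qed
  qed
  let ?p = "play N \<rho> s0"
  have step: "\<forall>t. (\<forall>t'\<le>t. \<not> capture N (?p t')) \<longrightarrow>
                    (\<lambda>s. - val m r s) (?p t) \<le> \<gamma> * G (\<lambda>s. - r s) (\<lambda>s. - val m r s) (?p (Suc t))"
  proof (intro allI impI)
    fix t assume P: "\<forall>t'\<le>t. \<not> capture N (?p t')"
    have st: "?p t \<in> States V N" using play_States[where \<rho>=\<rho> and t=t, OF s0 H] P by auto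
    have ncs: "\<not> capture N (?p t)" using P by auto
    have l: "last (hist N \<rho> s0 t) = ?p t" by (simp add: play_def)
    define u where "u = \<rho> (snd (?p t)) (hist N \<rho> s0 t)"
    have um: "u \<in> moves (?p t)" using H[rule_format, of "hist N \<rho> s0 t"] hist_ne[of N \<rho> s0 t] l st ncs
      unfolding u_def by auto
    have ps: "?p (Suc t) = move N (?p t) u" unfolding u_def by (simp add: play_Suc)
    have "\<gamma> * G r (val m r) (?p (Suc t)) \<le> val m r (?p t)"
    proof (cases "snd (?p t) = m")
      case True then show ?thesis using bell_max[OF r ncs True um] ps by simp
    next
      case False
      then have "u = ch m r (?p t)" using oth l unfolding u_def by simp
      then have "good m r (?p t) u" using ch_good[OF ncs] by simp
      then show ?thesis using val_fix[OF r, of m "?p t"] ps unfolding good_def by simp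
    qed
    then show "(\<lambda>s. - val m r s) (?p t) \<le> \<gamma> * G (\<lambda>s. - r s) (\<lambda>s. - val m r s) (?p (Suc t))"
      by (simp add: G_neg)
  qed
  have wb: "\<forall>s. \<bar>(\<lambda>s. - val m r s) s\<bar> \<le> 1 / (1 - \<gamma>)" using val_bound[OF r] by simp
  have "- val m r s0 \<le> gpay (\<lambda>s. - r s) \<rho> s0"
    using lower_gen[OF nc wb step] by simp
  then show ?thesis by (simp add: gpay_neg)
qed

lemma lower:
  assumes r: "\<forall>s. \<bar>r s\<bar> \<le> 1" and s0: "s0 \<in> States V N" and nc: "\<not> capture N s0"
    and me: "\<forall>h. \<rho> m h = ch m r (last h)" and lg: "\<forall>n\<in>{1..N}. legal_hs V E N n (\<rho> n)"
  shows "val m r s0 \<le> gpay r \<rho> s0"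
proof -
  have H: "\<forall>h. h \<noteq> [] \<and> last h \<in> States V N \<and> \<not> capture N (last h) \<longrightarrow> \<rho> (snd (last h)) h \<in> moves (last h)"
  proof (intro allI impI)
    fix h assume a: "h \<noteq> [] \<and> last h \<in> States V N \<and> \<not> capture N (last h)"
    have sn: "snd (last h) \<in> {1..N}" using a unfolding States_def by auto
    show "\<rho> (snd (last h)) h \<in> moves (last h)"
    proof (cases "snd (last h) = m")
      case True then show ?thesis using me ch_moves by simp
    next
      case False then show ?thesis using lg sn a unfolding legal_hs_def moves_def by auto
    qed
  qed
  let ?p = "play N \<rho> s0"
  have step: "\<forall>t. (\<forall>t'\<le>t. \<not> capture N (?p t')) \<longrightarrow>
                    val m r (?p t) \<le> \<gamma> * G r (val m r) (?p (Suc t))"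
  proof (intro allI impI)
    fix t assume P: "\<forall>t'\<le>t. \<not> capture N (?p t')"
    have st: "?p t \<in> States V N" using play_States[where \<rho>=\<rho> and t=t, OF s0 H] P by auto
    have ncs: "\<not> capture N (?p t)" using P by auto
    have l: "last (hist N \<rho> s0 t) = ?p t" by (simp add: play_def)
    define u where "u = \<rho> (snd (?p t)) (hist N \<rho> s0 t)"
    have um: "u \<in> moves (?p t)" using H[rule_format, of "hist N \<rho> s0 t"] hist_ne[of N \<rho> s0 t] l st ncs
      unfolding u_def by auto
    have ps: "?p (Suc t) = move N (?p t) u" unfolding u_def by (simp add: play_Suc)
    show "val m r (?p t) \<le> \<gamma> * G r (val m r) (?p (Suc t))"
    proof (cases "snd (?p t) = m")
      case False then show ?thesis using bell_min[OF r ncs False um] ps by simp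
    next
      case True
      then have "u = ch m r (?p t)" using me l unfolding u_def by simp
      then have "good m r (?p t) u" using ch_good[OF ncs] by simp
      then show ?thesis using val_fix[OF r, of m "?p t"] ps unfolding good_def by simp
    qed
  qed
  have wb: "\<forall>s. \<bar>val m r s\<bar> \<le> 1 / (1 - \<gamma>)" using val_bound[OF r] by simp
  show ?thesis using lower_gen[OF nc wb step] .
qed

lemma opt_pair:
  assumes r: "\<forall>s::'v state. \<bar>reward N m \<epsilon> s\<bar> \<le> 1"
  shows "optimal_pair V E N \<gamma> \<epsilon> m (\<lambda>n. ch m (reward N m \<epsilon>))"
proof -
  let ?r = "reward N m \<epsilon>"
  let ?\<phi> = "\<lambda>n::nat. ch m ?r"
  have pp: "pos_profile ?\<phi> = (\<lambda>n h. ch m ?r (last h))" by (simp add: pos_profile_def)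
  have lp: "\<forall>n\<in>{1..N}. legal_pos V E N n (?\<phi> n)"
    unfolding legal_pos_def by (metis ch_cnbhd)
  have lh: "\<forall>n. legal_hs V E N n (pos_profile ?\<phi> n)"
    unfolding pp legal_hs_def by (metis ch_cnbhd)
  have main: "\<forall>\<sigma>. legal_hs V E N m \<sigma> \<longrightarrow>
             payoff N m \<gamma> \<epsilon> s0 ((pos_profile ?\<phi>)(m := \<sigma>)) \<le> payoff N m \<gamma> \<epsilon> s0 (pos_profile ?\<phi>)"
     "\<forall>\<tau>. (\<forall>n\<in>{1..N}. legal_hs V E N n (\<tau> n)) \<longrightarrow>
             payoff N m \<gamma> \<epsilon> s0 (pos_profile ?\<phi>) \<le> payoff N m \<gamma> \<epsilon> s0 (\<tau>(m := pos_profile ?\<phi> m))"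
    if s0: "s0 \<in> States V N" and nc: "\<not> capture N s0" for s0
  proof -
    have lo: "val m ?r s0 \<le> gpay ?r (pos_profile ?\<phi>) s0"
      by (rule lower[OF r s0 nc]) (use lh pp in auto)
    have up: "gpay ?r (pos_profile ?\<phi>) s0 \<le> val m ?r s0"
      by (rule upper[OF r s0 nc]) (use lh pp N3 in auto)
    show "\<forall>\<sigma>. legal_hs V E N m \<sigma> \<longrightarrow>
             payoff N m \<gamma> \<epsilon> s0 ((pos_profile ?\<phi>)(m := \<sigma>)) \<le> payoff N m \<gamma> \<epsilon> s0 (pos_profile ?\<phi>)"
    proof (intro allI impI)
      fix \<sigma> assume "legal_hs V E N m \<sigma>"
      then have "gpay ?r ((pos_profile ?\<phi>)(m := \<sigma>)) s0 \<le> val m ?r s0"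
        by (intro upper[OF r s0 nc]) (auto simp: pp)
      then show "payoff N m \<gamma> \<epsilon> s0 ((pos_profile ?\<phi>)(m := \<sigma>)) \<le> payoff N m \<gamma> \<epsilon> s0 (pos_profile ?\<phi>)"
        using lo by (simp add: payoff_gpay)
    qed
    show "\<forall>\<tau>. (\<forall>n\<in>{1..N}. legal_hs V E N n (\<tau> n)) \<longrightarrow>
             payoff N m \<gamma> \<epsilon> s0 (pos_profile ?\<phi>) \<le> payoff N m \<gamma> \<epsilon> s0 (\<tau>(m := pos_profile ?\<phi> m))"
    proof (intro allI impI)
      fix \<tau> assume lt: "\<forall>n\<in>{1..N}. legal_hs V E N n (\<tau> n)"
      have "val m ?r s0 \<le> gpay ?r (\<tau>(m := pos_profile ?\<phi> m)) s0"
        by (rule lower[OF r s0 nc]) (use lt lh in \<open>auto simp: pp\<close>)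
      then show "payoff N m \<gamma> \<epsilon> s0 (pos_profile ?\<phi>) \<le> payoff N m \<gamma> \<epsilon> s0 (\<tau>(m := pos_profile ?\<phi> m))"
        using up by (simp add: payoff_gpay)
    qed
  qed
  show ?thesis unfolding optimal_pair_def using lp main by blast
qed

end


lemma reward_bd:
  assumes "N \<ge> 2"
  shows "\<bar>reward N m 0 s\<bar> \<le> 1" and "m \<noteq> N \<Longrightarrow> 0 \<le> reward N m 0 s"
proof -
  define K where "K = card {i\<in>{1..N-1}. fst s i = fst s N}"
  have a: "\<bar>1 / real K\<bar> \<le> 1" "0 \<le> 1 / real K" by (cases "K = 0") auto
  have b: "\<bar>1 / real (N - 1)\<bar> \<le> 1" "0 \<le> 1 / real (N-1)" using assms by auto
  show "\<bar>reward N m 0 s\<bar> \<le> 1" using a b unfolding reward_def K_def[symmetric] Let_def by auto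
  show "m \<noteq> N \<Longrightarrow> 0 \<le> reward N m 0 s" using a b unfolding reward_def K_def[symmetric] Let_def by auto
qed

lemma play_1: "play N \<rho> s (Suc 0) = move N s (\<rho> (snd s) [s])"
  by (simp add: play_def)

lemma pay_cap1:
  assumes "\<not> capture N s" "capture N (play N \<rho> s (Suc 0))"
  shows "payoff N N \<gamma> \<epsilon> s \<rho> = - \<gamma>"
proof -
  have "(LEAST t. capture N (play N \<rho> s t)) = Suc 0"
  proof (rule Least_equality)
    show "capture N (play N \<rho> s (Suc 0))" using assms(2) .
    fix y assume "capture N (play N \<rho> s y)" then show "Suc 0 \<le> y" using assms(1) by (cases y) auto
  qed
  then show ?thesis using assms unfolding payoff_def reward_def by auto
qed

lemma pay_late:
  assumes g: "0 < \<gamma>" "\<gamma> < 1" and "\<not> capture N s" "\<not> capture N (play N \<rho> s (Suc 0))"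
  shows "- (\<gamma>^2) \<le> payoff N N \<gamma> \<epsilon> s \<rho>"
proof (cases "\<exists>t. capture N (play N \<rho> s t)")
  case True
  define t where "t = (LEAST t. capture N (play N \<rho> s t))"
  have ct: "capture N (play N \<rho> s t)" unfolding t_def using True by (metis LeastI)
  have "t \<noteq> 0" proof assume "t = 0" then show False using ct assms by simp qed
  moreover have "t \<noteq> Suc 0" proof assume "t = Suc 0" then show False using ct assms by simp qed
  ultimately have "2 \<le> t" by linarith
  then have "\<gamma>^t \<le> \<gamma>^2" using g by (intro power_decreasing) auto
  then show ?thesis using True unfolding payoff_def reward_def t_def[symmetric] by (simp add: Let_def)
next
  case False then show ?thesis unfolding payoff_def by simp
qed

lemma CR_robber:
  assumes g: "0 < \<gamma>" "\<gamma> < 1" and opt: "optimal_pair V E N \<gamma> \<epsilon> N \<phi>"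
    and s: "s \<in> States V N" "\<not> capture N s" "snd s = N"
  shows "\<not> capture N (move N s (\<phi> N s))"
proof
  assume c: "capture N (move N s (\<phi> N s))"
  define \<sigma> :: "'a hstrat" where "\<sigma> = (\<lambda>h. fst (last h) N)"
  have l: "legal_hs V E N N \<sigma>" unfolding legal_hs_def \<sigma>_def cnbhd_def by auto
  have "payoff N N \<gamma> \<epsilon> s ((pos_profile \<phi>)(N := \<sigma>)) \<le> payoff N N \<gamma> \<epsilon> s (pos_profile \<phi>)"
    using opt s l unfolding optimal_pair_def by blast
  moreover have "payoff N N \<gamma> \<epsilon> s (pos_profile \<phi>) = - \<gamma>"
    by (rule pay_cap1) (use s c in \<open>simp_all add: play_1 pos_profile_def\<close>)
  moreover have "- (\<gamma>^2) \<le> payoff N N \<gamma> \<epsilon> s ((pos_profile \<phi>)(N := \<sigma>))"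
  proof (rule pay_late[OF g s(2)])
    have "move N s (fst s N) = (fst s, next_tok N N)" by (simp add: move_def s(3))
    then show "\<not> capture N (play N ((pos_profile \<phi>)(N := \<sigma>)) s (Suc 0))"
      using s by (simp add: play_1 \<sigma>_def capture_def)
  qed
  moreover have "\<gamma>^2 < \<gamma>" using g by (simp add: power2_eq_square)
  ultimately show False by linarith
qed

definition capX :: "nat \<Rightarrow> (nat \<Rightarrow> 'v) \<Rightarrow> bool" where
  "capX N x \<longleftrightarrow> (\<exists>i\<in>{1..N-1}. x i = x N)"

lemma capture_capX: "capture N s = capX N (fst s)" by (simp add: capture_def capX_def)

lemma reach_stays:
  assumes "(x, i) \<in> reach E N s0" "\<not> capX N x" "1 \<le> i" "i + d \<le> N"
  shows "(x, i + d) \<in> reach E N s0"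
  using assms(4)
proof (induction d)
  case 0 then show ?case using assms by simp
next
  case (Suc d)
  then have r: "(x, i + d) \<in> reach E N s0" by simp
  have "move N (x, i + d) (x (i + d)) = (x, i + Suc d)"
    using Suc.prems by (simp add: move_def next_tok_def)
  moreover have "x (i + d) \<in> cnbhd E (fst (x, i + d) (snd (x, i + d)))" by (simp add: cnbhd_def)
  ultimately show ?case using reach.step[OF r] assms(2) by (metis capture_capX fst_conv)
qed

lemma reach_States:
  assumes "s \<in> reach E N s0" "s0 \<in> States V N" "simple_connected_graph V E"
  shows "s \<in> States V N"
  using assms(1)
proof induction
  case start then show ?case using assms by simp
next
  case (step s v)
  have "v \<in> V" using step assms(3) unfolding States_def cnbhd_def simple_connected_graph_def by auto
  then show ?case using step assms(3) unfolding States_def move_def next_tok_def by auto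
qed

lemma round:
  assumes N: "N \<ge> 2" and r: "(x, N) \<in> reach E N s0" and nc: "\<not> capX N x"
    and v: "v \<in> cnbhd E (x N)" and nc1: "\<not> capX N (x(N := v))"
    and y: "y \<in> cnbhd E (x 1)" and nc2: "\<not> capX N (x(N := v, 1 := y))"
  shows "(x(N := v, 1 := y), N) \<in> reach E N s0"
proof -
  have "move N (x, N) v = (x(N := v), 1)" by (simp add: move_def next_tok_def)
  then have r1: "(x(N := v), 1) \<in> reach E N s0"
    using reach.step[OF r] nc v by (metis capture_capX fst_conv snd_conv)
  have "move N (x(N := v), 1) y = (x(N := v, 1 := y), 2)" using N by (simp add: move_def next_tok_def)
  moreover have "y \<in> cnbhd E (fst (x(N := v), 1) (snd (x(N := v), 1)))" using y N by simp
  ultimately have r2: "(x(N := v, 1 := y), 2) \<in> reach E N s0"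
    using reach.step[OF r1] nc1 by (metis capture_capX fst_conv)
  have "(x(N := v, 1 := y), 2 + (N - 2)) \<in> reach E N s0" by (rule reach_stays[OF r2 nc2]) (use N in auto)
  moreover have "2 + (N - 2) = N" using N by simp
  ultimately show ?thesis by metis
qed

lemma graph_escape:
  assumes G: "simple_connected_graph V E" and c: "card V \<ge> 3"
    and rw: "E r w" and lw: "\<forall>y. E w y \<longrightarrow> y = r"
  shows "\<exists>z. E r z \<and> z \<noteq> w"
proof -
  have fin: "finite V" and rV: "r \<in> V" and wV: "w \<in> V" using G rw unfolding simple_connected_graph_def by auto
  have "card {r, w} \<le> 2" by (simp add: card_insert_if)
  then have "\<not> V \<subseteq> {r, w}" using c card_mono[of "{r,w}" V] by auto
  then obtain z0 where z0: "z0 \<in> V" "z0 \<noteq> r" "z0 \<noteq> w" by auto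
  have "E\<^sup>*\<^sup>* r z0" using G rV z0 unfolding simple_connected_graph_def by auto
  then have "z0 = r \<or> z0 = w \<or> (\<exists>z. E r z \<and> z \<noteq> w)"
  proof (induction rule: rtranclp_induct)
    case base then show ?case by simp
  next
    case (step y y') then show ?case using lw by auto
  qed
  then show ?thesis using z0 by auto
qed



lemma walk:
  assumes N: "N \<ge> 2"
  shows "(x, N) \<in> reach E N s0 \<Longrightarrow> \<not> capX N x \<Longrightarrow> (E ^^ k) (x N) (x 1) \<Longrightarrow>
    \<exists>x'. (x', N) \<in> reach E N s0 \<and> \<not> capX N x' \<and> (\<exists>c\<in>{1..N-1}. E (x' N) (x' c))"
proof (induction k arbitrary: x)
  case 0
  then have "x N = x 1" by simp
  then have "capX N x" using N unfolding capX_def by force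
  then show ?case using 0 by simp
next
  case (Suc k)
  obtain r' where e: "E (x N) r'" and p: "(E ^^ k) r' (x 1)" using relpowp_Suc_E2[OF Suc.prems(3)] by blast
  show ?case
  proof (cases "\<exists>c\<in>{1..N-1}. x c = r'")
    case True then show ?thesis using Suc.prems e by auto
  next
    case False
    define x' where "x' = x(N := r', 1 := x 1)"
    have nc1: "\<not> capX N (x(N := r'))" using False N unfolding capX_def by auto
    have nc2: "\<not> capX N x'" using False N unfolding capX_def x'_def by auto
    have r: "(x', N) \<in> reach E N s0" unfolding x'_def
      by (rule round[OF N Suc.prems(1,2) _ nc1 _ nc2[unfolded x'_def]]) (use e in \<open>auto simp: cnbhd_def\<close>)
    have "(E ^^ k) (x' N) (x' 1)" using p N by (simp add: x'_def)
    then show ?thesis using Suc.IH[OF r nc2] by blast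
  qed
qed

lemma spread:
  assumes G: "simple_connected_graph V E" and cV: "card V \<ge> 3" and N: "N \<ge> 3"
    and s0: "s0 \<in> States V N"
    and r: "(x, N) \<in> reach E N s0" and nc: "\<not> capX N x"
    and c: "c \<in> {1..N-1}" and e: "E (x N) (x c)"
  shows "\<exists>x' c' m. (x', N) \<in> reach E N s0 \<and> \<not> capX N x' \<and> c' \<in> {1..N-1} \<and> m \<in> {1..N-1}
           \<and> E (x' N) (x' c') \<and> x' m \<noteq> x' c'"
proof (cases "\<exists>m\<in>{1..N-1}. x m \<noteq> x c")
  case True then show ?thesis using r nc c e by blast
next
  case False
  define w where "w = x c"
  have all: "\<forall>i\<in>{1..N-1}. x i = w" using False w_def by auto
  have x1: "x 1 = w" using all N by auto
  have x2: "x 2 = w" using all N by auto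
  have sym: "\<And>a b. E a b \<Longrightarrow> E b a" and irr: "\<And>a. \<not> E a a" using G unfolding simple_connected_graph_def by auto
  have rw: "x N \<noteq> w" using e irr w_def by metis
  show ?thesis
  proof (cases "\<exists>y. E w y \<and> y \<noteq> x N")
    case True
    then obtain y where y: "E w y" "y \<noteq> x N" by blast
    have yw: "y \<noteq> w" using y irr by metis
    define x' where "x' = x(N := x N, 1 := y)"
    have nc1: "\<not> capX N (x(N := x N))" using nc by simp
    have nc2: "\<not> capX N x'" using all y N rw unfolding capX_def x'_def by auto
    have r': "(x', N) \<in> reach E N s0" unfolding x'_def
      by (rule round) (use N r nc nc1 nc2 y x1 in \<open>auto simp: cnbhd_def x'_def\<close>)
    have "E (x' N) (x' 2)" using e N x2 w_def by (simp add: x'_def)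
    moreover have "x' 1 \<noteq> x' 2" using N x2 yw by (simp add: x'_def)
    ultimately show ?thesis using r' nc2 N by (intro exI[of _ x'] exI[of _ 2] exI[of _ 1]) auto
  next
    case False
    then have lw: "\<forall>y. E w y \<longrightarrow> y = x N" by blast
    obtain z where z: "E (x N) z" "z \<noteq> w" using graph_escape[OF G cV e[folded w_def] lw] by blast
    have zr: "z \<noteq> x N" using z irr by metis
    define x' where "x' = x(N := z, 1 := x N)"
    have nc1: "\<not> capX N (x(N := z))" using all z N unfolding capX_def by auto
    have nc2: "\<not> capX N x'" using all z zr N unfolding capX_def x'_def by auto
    have r': "(x', N) \<in> reach E N s0" unfolding x'_def
      by (rule round) (use N r nc nc1 nc2 z x1 e w_def sym in \<open>auto simp: cnbhd_def x'_def\<close>)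
    have "E (x' N) (x' 1)" using z sym N by (simp add: x'_def)
    moreover have "x' 2 \<noteq> x' 1" using N x2 rw by (simp add: x'_def)
    ultimately show ?thesis using r' nc2 N by (intro exI[of _ x'] exI[of _ 1] exI[of _ 2]) auto
  qed
qed

lemma target:
  assumes G: "simple_connected_graph V E" and cV: "card V \<ge> 3" and N: "N \<ge> 3"
    and s0: "s0 \<in> States V N" and nc0: "\<not> capture N s0"
  shows "\<exists>x c m. (x, N) \<in> reach E N s0 \<and> \<not> capX N x \<and> c \<in> {1..N-1} \<and> m \<in> {1..N-1}
           \<and> E (x N) (x c) \<and> x m \<noteq> x c"
proof -
  obtain x0 n0 where sd: "s0 = (x0, n0)" by fastforce
  have n0: "1 \<le> n0" "n0 \<le> N" using s0 sd unfolding States_def by auto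
  have nc: "\<not> capX N x0" using nc0 sd by (simp add: capture_capX)
  have "(x0, n0 + (N - n0)) \<in> reach E N s0"
    by (rule reach_stays) (use n0 nc sd reach.start in auto)
  then have r0: "(x0, N) \<in> reach E N s0" using n0 by simp
  have V: "x0 N \<in> V" "x0 1 \<in> V" using s0 sd N unfolding States_def by auto
  have "E\<^sup>*\<^sup>* (x0 N) (x0 1)" using G V unfolding simple_connected_graph_def by auto
  then obtain k where "(E ^^ k) (x0 N) (x0 1)" using rtranclp_imp_relpowp by metis
  then obtain x1 c where "(x1, N) \<in> reach E N s0" "\<not> capX N x1" "c \<in> {1..N-1}" "E (x1 N) (x1 c)"
    using walk[OF _ r0 nc] N by force
  then show ?thesis using spread[OF G cV N s0] by blast
qed



context game begin

lemma ch_cap_target: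
  assumes m: "m \<in> {1..N-1}" and nc: "\<not> capX N x" and c: "c \<in> {1..N-1}"
    and e: "E (x N) (x c)" and mc: "x m \<noteq> x c"
  shows "capture N (move N (x, N) (ch m (reward N m 0) (x, N)))"
proof -
  let ?r = "reward N m 0"
  let ?s = "(x, N)"
  have N2: "N \<ge> 2" using N3 by simp
  have rb: "\<forall>s::'v state. \<bar>?r s\<bar> \<le> 1" using reward_bd(1)[OF N2] by blast
  have mN: "m \<noteq> N" using m by auto
  have r0: "\<forall>s::'v state. 0 \<le> ?r s" using reward_bd(2)[OF N2 mN] by blast
  have ncs: "\<not> capture N ?s" using nc by (simp add: capture_capX)
  define u0 where "u0 = x c"
  have u0m: "u0 \<in> moves ?s" using e by (simp add: moves_def cnbhd_def u0_def)
  have cN: "c \<noteq> N" using c by auto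
  have fm: "fst (move N ?s u0) = x(N := x c)" by (simp add: move_def u0_def)
  have cap0: "capture N (move N ?s u0)" using c cN unfolding capture_def fm by auto
  have sub: "{i\<in>{1..N-1}. fst (move N ?s u0) i = fst (move N ?s u0) N} \<subseteq> {1..N-1} - {m}"
    using mc mN unfolding fm by auto
  have "card {i\<in>{1..N-1}. fst (move N ?s u0) i = fst (move N ?s u0) N} \<le> card ({1..N-1} - {m})"
    by (rule card_mono[OF _ sub]) simp
  also have "\<dots> = N - 2" using m by simp
  finally have K: "card {i\<in>{1..N-1}. fst (move N ?s u0) i = fst (move N ?s u0) N} \<noteq> N - 1" using N3 by linarith
  have rz: "?r (move N ?s u0) = 0"
    using K mN mc cN unfolding reward_def Let_def fm by auto
  let ?A = "(\<lambda>u. G ?r (val m ?r) (move N ?s u)) ` moves ?s"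
  have fi: "finite ?A" using moves_fin by blast
  have g0': "0 \<le> G ?r (val m ?r) s'" for s'
    using val_nonneg[OF rb r0, of m s'] r0[rule_format, of s'] by (simp add: G_def)
  have all0: "\<forall>y\<in>?A. 0 \<le> y" using g0' by blast
  have in0: "0 \<in> ?A" using u0m cap0 rz by (force simp: G_def)
  have "Min ?A = 0" by (rule Min_eqI[OF fi]) (use all0 in0 in auto)
  then have "T m ?r (val m ?r) ?s = 0" using ncs mN by (simp add: T_def)
  then have "good m ?r ?s u0" using u0m cap0 rz by (simp add: good_def G_def)
  then show ?thesis using ch_capture[OF ncs _ cap0] by blast
qed

end

theorem mainTheorem5:
  fixes V :: "'v set" and E :: "'v \<Rightarrow> 'v \<Rightarrow> bool" and N :: nat and \<gamma> :: real
    and s0 :: "'v state"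
  assumes "simple_connected_graph V E"
    and "card V \<ge> 3"
    and "N \<ge> 3"
    and "0 < \<gamma>" and "\<gamma> < 1"
    and "s0 \<in> States V N" and "\<not> capture N s0"
  shows "\<exists>\<Phi>. trigger_choice V E N \<gamma> 0 \<Phi> \<and> \<not> positional_trigger V E N \<gamma> 0 s0 \<Phi>"
proof -
  interpret game V E N \<gamma> using assms by unfold_locales auto
  define \<Phi> where "\<Phi> = (\<lambda>m (n::nat). ch m (reward N m 0))"
  have N2: "N \<ge> 2" using assms by simp
  have tc: "trigger_choice V E N \<gamma> 0 \<Phi>"
    unfolding trigger_choice_def \<Phi>_def
    using opt_pair reward_bd(1)[OF N2] by blast
  obtain x c m where t: "(x, N) \<in> reach E N s0" "\<not> capX N x" "c \<in> {1..N-1}" "m \<in> {1..N-1}"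
      "E (x N) (x c)" "x m \<noteq> x c"
    using target[OF assms(1,2,3,6,7)] by blast
  have npt: "\<not> positional_trigger V E N \<gamma> 0 s0 \<Phi>"
  proof
    assume "positional_trigger V E N \<gamma> 0 s0 \<Phi>"
    moreover have "N \<in> {1..N}" "m \<in> {1..N}" using t assms by auto
    ultimately obtain \<psi> where \<psi>: "\<psi> \<in> CR_opt V E N \<gamma> 0 N"
      and eq: "\<forall>s\<in>reach E N s0. snd s = N \<and> \<not> capture N s \<longrightarrow> \<Phi> m N s = \<psi> s"
      unfolding positional_trigger_def by blast
    obtain \<phi> where op: "optimal_pair V E N \<gamma> 0 N \<phi>" and pd: "\<psi> = \<phi> N"
      using \<psi> unfolding CR_opt_def by blast
    have ncs: "\<not> capture N (x, N)" using t by (simp add: capture_capX)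
    have st: "(x, N) \<in> States V N" using reach_States[OF t(1) assms(6,1)] .
    have "\<not> capture N (move N (x, N) (\<phi> N (x, N)))"
      using CR_robber[OF assms(4,5) op st ncs] by simp
    moreover have "\<Phi> m N (x, N) = \<phi> N (x, N)" using eq t(1) ncs pd by auto
    moreover have "capture N (move N (x, N) (\<Phi> m N (x, N)))"
      unfolding \<Phi>_def by (rule ch_cap_target) (use t in auto)
    ultimately show False by simp
  qed
  show ?thesis using tc npt by blast
qed

end
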